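(* Let $X$ be a countable infinite set, $\mathcal{I}$ a $q^+$ and hereditarily meager ideal on $X$, and $\tau$ an $\mathcal{I}$-crowded topology on $X$ with $w(\tau)<\mathfrak{m}_c$. If $\langle F_i:i\in\omega\rangle$ is a sequence of pairwise disjoint finite subsets of $X$ such that $\bigcup_{i\in\omega}F_i$ is $(\mathcal{I},\tau)$-crowded, then there is an $(\mathcal{I},\tau)$-crowded $S\subseteq\bigcup_{i\in\omega}F_i$ such that $|S\cap F_i|\le 1$ for each $i$ and $cl_\tau(S)=cl_\tau(\bigcup_{i\in\omega}F_i)$.
   Context: An ideal on $X$ is a family of subsets of $X$ closed under subsets and finite unions; all ideals are assumed proper ($X\notin\mathcal{I}$) and free (every finite subset of $X$ is in $\mathcal{I}$). $\mathcal{I}^+=\mathcal{P}(X)\setminus\mathcal{I}$. Subsets of $X$ are identified with points of $2^X$. $\mathcal{I}$ is hereditarily meager if for every $A\in\mathcal{I}^+$, $\mathcal{I}\cap\mathcal{P}(A)$ is meager in $2^A$. $\mathcal{I}$ is $q^+$ if for every $A\in\mathcal{I}^+$ and every partition $(F_n)_n$ of $A$ into finite sets there is $S\subseteq A$ with $S\in\mathcal{I}^+$ and $|S\cap F_n|\le1$ for all $n$. A topology $\tau$ on $X$ is $\mathcal{I}$-crowded if $\tau\cap\mathcal{I}=\{\emptyset\}$. A set $A\subseteq X$ is $(\mathcal{I},\tau)$-crowded if for every $U\in\tau$, $A\cap U$ is either empty or in $\mathcal{I}^+$. $\mathfrak{m}_c$ is the least cardinal $\kappa$ such that MA$(\kappa)$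 for countable posets fails. $w$ denotes weight. *)

theory Defs
  imports "HOL-Analysis.Analysis" "HOL-Library.Equipollence"
begin

definition ideal_on :: "'a set \<Rightarrow> 'a set set \<Rightarrow> bool" where
  "ideal_on X I \<longleftrightarrow>
     I \<subseteq> Pow X \<and>
     (\<forall>A B. A \<in> I \<and> B \<subseteq> A \<longrightarrow> B \<in> I) \<and>
     (\<forall>A B. A \<in> I \<and> B \<in> I \<longrightarrow> A \<union> B \<in> I) \<and>
     X \<notin> I \<and>
     (\<forall>F. F \<subseteq> X \<and> finite F \<longrightarrow> F \<in> I)"

definition Iplus :: "'a set \<Rightarrow> 'a set set \<Rightarrow> 'a set set" where
  "Iplus X I = Pow X - I"

definition cantor_space :: "'a set \<Rightarrow> ('a \<Rightarrow> bool) topology" where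
  "cantor_space A = product_topology (\<lambda>_. discrete_topology (UNIV :: bool set)) A"

definition char_pt :: "'a set \<Rightarrow> 'a set \<Rightarrow> ('a \<Rightarrow> bool)" where
  "char_pt A S = restrict (\<lambda>x. x \<in> S) A"

definition nowhere_dense_in :: "'b topology \<Rightarrow> 'b set \<Rightarrow> bool" where
  "nowhere_dense_in T N \<longleftrightarrow> N \<subseteq> topspace T \<and> T interior_of (T closure_of N) = {}"

definition meager_in :: "'b topology \<Rightarrow> 'b set \<Rightarrow> bool" where
  "meager_in T M \<longleftrightarrow> M \<subseteq> topspace T \<and>
     (\<exists>\<N>. countable \<N> \<and> (\<forall>N\<in>\<N>. nowhere_dense_in T N) \<and> M \<subseteq> \<Union>\<N>)"

definition hereditarily_meager :: "'a set \<Rightarrow> 'a set set \<Rightarrow> bool" where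
  "hereditarily_meager X I \<longleftrightarrow>
     (\<forall>A \<in> Iplus X I. meager_in (cantor_space A) (char_pt A ` {S \<in> I. S \<subseteq> A}))"

definition q_plus :: "'a set \<Rightarrow> 'a set set \<Rightarrow> bool" where
  "q_plus X I \<longleftrightarrow>
     (\<forall>A \<in> Iplus X I. \<forall>F :: nat \<Rightarrow> 'a set.
        ((\<forall>n. finite (F n) \<and> F n \<noteq> {}) \<and> (\<forall>m n. m \<noteq> n \<longrightarrow> F m \<inter> F n = {}) \<and>
         (\<Union>n. F n) = A)
        \<longrightarrow> (\<exists>S \<subseteq> A. S \<in> Iplus X I \<and> (\<forall>n. card (S \<inter> F n) \<le> 1)))"

definition I_crowded_topology :: "'a set set \<Rightarrow> 'a topology \<Rightarrow> bool" where
  "I_crowded_topology I \<tau> \<longleftrightarrow> {U. openin \<tau> U} \<inter> I = {{}}"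

definition I_tau_crowded :: "'a set \<Rightarrow> 'a set set \<Rightarrow> 'a topology \<Rightarrow> 'a set \<Rightarrow> bool" where
  "I_tau_crowded X I \<tau> A \<longleftrightarrow> (\<forall>U. openin \<tau> U \<longrightarrow> A \<inter> U = {} \<or> A \<inter> U \<in> Iplus X I)"

definition base_of :: "'a topology \<Rightarrow> 'a set set \<Rightarrow> bool" where
  "base_of \<tau> \<B> \<longleftrightarrow> (\<forall>B\<in>\<B>. openin \<tau> B) \<and>
     (\<forall>U. openin \<tau> U \<longrightarrow> (\<exists>\<C> \<subseteq> \<B>. \<Union>\<C> = U))"

text \<open>Countable posets: carrier P (a subset of nat; every countable poset is isomorphic to one
  of this form) with a partial order le on P.\<close>
definition countable_poset :: "nat set \<Rightarrow> (nat \<Rightarrow> nat \<Rightarrow> bool) \<Rightarrow> bool" where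
  "countable_poset P le \<longleftrightarrow> P \<noteq> {} \<and>
     (\<forall>p\<in>P. le p p) \<and>
     (\<forall>p\<in>P. \<forall>q\<in>P. le p q \<and> le q p \<longrightarrow> p = q) \<and>
     (\<forall>p\<in>P. \<forall>q\<in>P. \<forall>r\<in>P. le p q \<and> le q r \<longrightarrow> le p r)"

definition dense_in_poset :: "nat set \<Rightarrow> (nat \<Rightarrow> nat \<Rightarrow> bool) \<Rightarrow> nat set \<Rightarrow> bool" where
  "dense_in_poset P le D \<longleftrightarrow> D \<subseteq> P \<and> (\<forall>p\<in>P. \<exists>q\<in>D. le q p)"

definition filter_in_poset :: "nat set \<Rightarrow> (nat \<Rightarrow> nat \<Rightarrow> bool) \<Rightarrow> nat set \<Rightarrow> bool" where
  "filter_in_poset P le G \<longleftrightarrow> G \<subseteq> P \<and> G \<noteq> {} \<and>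
     (\<forall>p\<in>G. \<forall>q\<in>P. le p q \<longrightarrow> q \<in> G) \<and>
     (\<forall>p\<in>G. \<forall>q\<in>G. \<exists>r\<in>G. le r p \<and> le r q)"

text \<open>MA(kappa) for countable posets, where kappa = |K|.\<close>
definition MA_countable :: "'k set \<Rightarrow> bool" where
  "MA_countable K \<longleftrightarrow>
     (\<forall>P le (D :: 'k \<Rightarrow> nat set). countable_poset P le \<and> (\<forall>k\<in>K. dense_in_poset P le (D k))
        \<longrightarrow> (\<exists>G. filter_in_poset P le G \<and> (\<forall>k\<in>K. G \<inter> D k \<noteq> {})))"

text \<open>m_c is the least cardinal at which MA for countable posets fails. Hence
  w(tau) < m_c means: MA(kappa) for countable posets holds for every kappa <= w(tau),
  where w(tau) is the minimal cardinality of a base of tau.\<close>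
definition weight_below_mc :: "'a topology \<Rightarrow> bool" where
  "weight_below_mc \<tau> \<longleftrightarrow>
     (\<exists>\<B>. base_of \<tau> \<B> \<and> (\<forall>\<B>'. base_of \<tau> \<B>' \<longrightarrow> \<B> \<lesssim> \<B>') \<and>
          (\<forall>K :: 'a set set. K \<lesssim> \<B> \<longrightarrow> MA_countable K))"

end

theory Submission
  imports Defs
begin


lemma infinite_surj_times_nat:
  assumes "infinite (B::'b set)"
  shows "\<exists>h. B \<times> (UNIV::nat set) \<subseteq> h ` B"
proof -
  have "(card_of (B \<times> B), card_of B) \<in> ordIso" by (rule card_of_Times_same_infinite[OF assms])
  then have "\<exists>f. bij_betw f (B \<times> B) B" by (simp only: card_of_ordIso)
  then obtain f where f: "bij_betw f (B \<times> B) B" by (elim exE)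
  obtain e :: "nat \<Rightarrow> 'b" where e: "inj e" "range e \<subseteq> B"
    using assms infinite_countable_subset by blast
  define g where "g = (\<lambda>(b, n). f (b, e n))"
  have inj: "inj_on g (B \<times> UNIV)"
  proof (rule inj_onI)
    fix x y assume xy: "x \<in> B \<times> (UNIV::nat set)" "y \<in> B \<times> (UNIV::nat set)" "g x = g y"
    obtain b n c m where bn: "x = (b, n)" "y = (c, m)" by (cases x; cases y) (simp)
    have "(b, e n) \<in> B \<times> B" "(c, e m) \<in> B \<times> B" using xy bn e by auto
    moreover have "f (b, e n) = f (c, e m)" using xy bn g_def by simp
    ultimately have "(b, e n) = (c, e m)" using f unfolding bij_betw_def inj_on_def by blast
    then show "x = y" using bn e(1) by (simp add: inj_eq)
  qed
  have gB: "g ` (B \<times> UNIV) \<subseteq> B" using f e unfolding g_def bij_betw_def by auto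
  show ?thesis
  proof (intro exI subsetI)
    fix x assume x: "x \<in> B \<times> (UNIV::nat set)"
    then have "x = inv_into (B \<times> UNIV) g (g x)" using inj by simp
    then show "x \<in> inv_into (B \<times> UNIV) g ` B" using gB x by blast
  qed
qed



lemma RS_generic:
  fixes C :: "'c set" and le :: "'c \<Rightarrow> 'c \<Rightarrow> bool" and D :: "'j \<Rightarrow> 'c set"
  assumes "C \<noteq> {}" and tr: "\<forall>p\<in>C. \<forall>q\<in>C. \<forall>r\<in>C. le p q \<and> le q r \<longrightarrow> le p r"
    and rf: "\<forall>p\<in>C. le p p"
    and dn: "\<forall>j\<in>J. \<forall>p\<in>C. \<exists>q\<in>D j \<inter> C. le q p" and "countable J"
  shows "\<exists>G \<subseteq> C. (\<forall>p\<in>G. \<forall>q\<in>G. \<exists>r\<in>C. le r p \<and> le r q) \<and> (\<forall>j\<in>J. G \<inter> D j \<noteq> {})"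
proof (cases "J = {}")
  case True show ?thesis by (rule exI[of _ "{}"]) (simp add: True)
next
  case False
  define e where "e = from_nat_into J"
  have eJ: "range e = J" unfolding e_def by (rule range_from_nat_into[OF False assms(5)])
  define p where "p = rec_nat (SOME x. x \<in> C) (\<lambda>n pn. SOME q. q \<in> D (e n) \<inter> C \<and> le q pn)"
  have p0: "p 0 = (SOME x. x \<in> C)" and pS: "\<And>n. p (Suc n) = (SOME q. q \<in> D (e n) \<inter> C \<and> le q (p n))"
    unfolding p_def by simp_all
  have step: "p (Suc n) \<in> D (e n) \<inter> C \<and> le (p (Suc n)) (p n)" if pn: "p n \<in> C" for n
  proof -
    have "e n \<in> J" using eJ by blast
    then obtain q where "q \<in> D (e n) \<inter> C \<and> le q (p n)" using dn pn by blast
    then show ?thesis unfolding pS by (rule someI)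
  qed
  have p0C: "p 0 \<in> C" unfolding p0 using assms(1) by (simp add: some_in_eq)
  have pCn: "p n \<in> C" for n
  proof (induction n)
    case 0 show ?case by (rule p0C)
  next
    case (Suc n) then show ?case using step by blast
  qed
  have pC: "\<And>n. p n \<in> C \<and> (p (Suc n) \<in> D (e n) \<and> le (p (Suc n)) (p n))"
    using pCn step by blast
  have mono: "n \<le> m \<Longrightarrow> le (p m) (p n)" for n m
  proof (induction m rule: dec_induct)
    case base then show ?case using rf pC by blast
  next
    case (step m) then show ?case using tr pC by blast
  qed
  show ?thesis
  proof (intro exI conjI ballI)
    show "range p \<subseteq> C" using pC by blast
    fix j assume "j \<in> J"
    then obtain n where "j = e n" using eJ by blast
    then show "range p \<inter> D j \<noteq> {}" using pC by blast
  next
    fix a b assume "a \<in> range p" "b \<in> range p"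
    then obtain n m where "a = p n" "b = p m" by blast
    then show "\<exists>r\<in>C. le r a \<and> le r b"
      by (intro bexI[of _ "p (max n m)"]) (auto intro!: mono simp: pC)
  qed
qed



lemma MA_generic:
  fixes C :: "'c set" and le :: "'c \<Rightarrow> 'c \<Rightarrow> bool" and D :: "'j \<Rightarrow> 'c set"
    and K :: "'k set"
  assumes "C \<noteq> {}" "countable C" and tr: "\<forall>p\<in>C. \<forall>q\<in>C. \<forall>r\<in>C. le p q \<and> le q r \<longrightarrow> le p r"
    and rf: "\<forall>p\<in>C. le p p" and an: "\<forall>p\<in>C. \<forall>q\<in>C. le p q \<and> le q p \<longrightarrow> p = q"
    and dn: "\<forall>j\<in>J. \<forall>p\<in>C. \<exists>q\<in>D j \<inter> C. le q p"
    and ma: "MA_countable K" and hK: "J \<subseteq> h ` K"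
  shows "\<exists>G \<subseteq> C. (\<forall>p\<in>G. \<forall>q\<in>G. \<exists>r\<in>C. le r p \<and> le r q) \<and> (\<forall>j\<in>J. G \<inter> D j \<noteq> {})"
proof -
  obtain e :: "'c \<Rightarrow> nat" where e: "inj_on e C" using assms(2) unfolding countable_def by blast
  define iv where "iv = inv_into C e"
  have ive: "\<And>x. x \<in> C \<Longrightarrow> iv (e x) = x" using e iv_def by simp
  define P where "P = e ` C"
  define le' where "le' = (\<lambda>a b. le (iv a) (iv b))"
  define DD where "DD = (\<lambda>k. if h k \<in> J then e ` (D (h k) \<inter> C) else P)"
  have cp: "countable_poset P le'" unfolding countable_poset_def
  proof (intro conjI ballI impI)
    show "P \<noteq> {}" using assms(1) P_def by blast
  next
    fix a assume "a \<in> P"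
    then obtain x where "x \<in> C" "a = e x" using P_def by blast
    then show "le' a a" using rf ive le'_def by simp
  next
    fix a b assume ab: "a \<in> P" "b \<in> P" "le' a b \<and> le' b a"
    obtain x y where xy: "x \<in> C" "y \<in> C" "a = e x" "b = e y" using ab(1,2) P_def by blast
    then have "le x y \<and> le y x" using ab(3) ive le'_def by simp
    then show "a = b" using an xy by blast
  next
    fix a b c assume abc: "a \<in> P" "b \<in> P" "c \<in> P" "le' a b \<and> le' b c"
    obtain x y z where xyz: "x \<in> C" "y \<in> C" "z \<in> C" "a = e x" "b = e y" "c = e z"
      using abc(1,2,3) P_def by blast
    then have "le x y \<and> le y z" using abc(4) ive le'_def by simp
    then have "le x z" using tr xyz by blast
    then show "le' a c" using xyz ive le'_def by simp
  qed
  have dd: "\<forall>k\<in>K. dense_in_poset P le' (DD k)"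
  proof
    fix k assume "k \<in> K"
    show "dense_in_poset P le' (DD k)"
    proof (cases "h k \<in> J")
      case True
      show ?thesis unfolding dense_in_poset_def
      proof (intro conjI ballI)
        show "DD k \<subseteq> P" using True DD_def P_def by auto
        fix a assume "a \<in> P"
        then obtain x where x: "x \<in> C" "a = e x" using P_def by blast
        obtain q where q: "q \<in> D (h k) \<inter> C" "le q x" using dn True x(1) by blast
        have "e q \<in> DD k" using True q(1) DD_def by simp
        moreover have "le' (e q) a" using q x ive le'_def by simp
        ultimately show "\<exists>q\<in>DD k. le' q a" by blast
      qed
    next
      case False
      show ?thesis unfolding dense_in_poset_def
      proof (intro conjI ballI)
        show "DD k \<subseteq> P" using False DD_def by simp
        fix a assume "a \<in> P"
        then obtain x where x: "x \<in> C" "a = e x" using P_def by blast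
        then have "le' a a" using rf ive le'_def by simp
        moreover have "a \<in> DD k" using False \<open>a \<in> P\<close> DD_def by simp
        ultimately show "\<exists>q\<in>DD k. le' q a" by blast
      qed
    qed
  qed
  obtain G' where G': "filter_in_poset P le' G'" "\<forall>k\<in>K. G' \<inter> DD k \<noteq> {}"
    using ma[unfolded MA_countable_def, rule_format, of P le' DD] cp dd by blast
  show ?thesis
  proof (intro exI[of _ "iv ` G'"] conjI ballI)
    show "iv ` G' \<subseteq> C" using G'(1) unfolding filter_in_poset_def P_def iv_def
      by (auto intro: inv_into_into)
    fix a b assume "a \<in> iv ` G'" "b \<in> iv ` G'"
    then obtain a' b' where "a' \<in> G'" "b' \<in> G'" "a = iv a'" "b = iv b'" by blast
    then obtain r where "r \<in> G'" "le' r a'" "le' r b'" using G'(1) unfolding filter_in_poset_def by blast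
    moreover have "iv r \<in> C" using \<open>r \<in> G'\<close> G'(1) unfolding filter_in_poset_def P_def iv_def
      by (auto intro: inv_into_into)
    ultimately show "\<exists>r\<in>C. le r a \<and> le r b" unfolding le'_def using \<open>a = iv a'\<close> \<open>b = iv b'\<close> by blast
  next
    fix j assume "j \<in> J"
    then obtain k where k: "k \<in> K" "h k = j" using hK by blast
    then obtain x where "x \<in> G'" "x \<in> DD k" using G'(2) by blast
    then obtain y where "y \<in> D j \<inter> C" "x = e y" using k \<open>j \<in> J\<close> unfolding DD_def by auto
    then show "iv ` G' \<inter> D j \<noteq> {}" using ive \<open>x \<in> G'\<close> by force
  qed
qed



lemma pos_infinite:
  assumes "ideal_on X I" "Y \<in> Iplus X I" shows "infinite Y"
  using assms unfolding ideal_on_def Iplus_def by auto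

lemma pos_mono:
  assumes "ideal_on X I" "Y \<in> Iplus X I" "Y \<subseteq> Z" "Z \<subseteq> X" shows "Z \<in> Iplus X I"
  using assms unfolding ideal_on_def Iplus_def by blast

lemma selector_exists:
  fixes F :: "nat \<Rightarrow> 'a set"
  assumes id: "ideal_on X I" and q: "q_plus X I" and Y: "Y \<in> Iplus X I"
    and fin: "\<forall>i. finite (F i)" and dis: "\<forall>i j. i \<noteq> j \<longrightarrow> F i \<inter> F j = {}"
    and sub: "Y \<subseteq> (\<Union>i. F i)"
  shows "\<exists>Z\<subseteq>Y. Z \<in> Iplus X I \<and> (\<forall>i. card (Z \<inter> F i) \<le> 1)"
proof -
  define Ju where "Ju = {i. F i \<inter> Y \<noteq> {}}"
  have "infinite Ju"
  proof
    assume "finite Ju"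
    have "Y \<subseteq> (\<Union>i\<in>Ju. F i)" using sub unfolding Ju_def by blast
    then have "finite Y" using \<open>finite Ju\<close> fin by (meson finite_UN_I finite_subset)
    then show False using pos_infinite[OF id Y] by blast
  qed
  define en where "en = enumerate Ju"
  have bij: "bij_betw en UNIV Ju" using bij_enumerate[OF \<open>infinite Ju\<close>] en_def by simp
  define G where "G = (\<lambda>n. F (en n) \<inter> Y)"
  have "(\<forall>n. finite (G n) \<and> G n \<noteq> {}) \<and> (\<forall>m n. m \<noteq> n \<longrightarrow> G m \<inter> G n = {}) \<and> (\<Union>n. G n) = Y"
  proof (intro conjI allI impI)
    fix n show "finite (G n)" using fin G_def by simp
    show "G n \<noteq> {}" using bij unfolding G_def Ju_def bij_betw_def by auto
  next
    fix m n :: nat assume "m \<noteq> n"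
    then have "en m \<noteq> en n" using bij unfolding bij_betw_def inj_on_def by blast
    then show "G m \<inter> G n = {}" using dis G_def by blast
  next
    show "(\<Union>n. G n) = Y"
    proof
      show "(\<Union>n. G n) \<subseteq> Y" using G_def by blast
      show "Y \<subseteq> (\<Union>n. G n)"
      proof
        fix y assume "y \<in> Y"
        then obtain i where "y \<in> F i" using sub by blast
        then have "i \<in> Ju" using \<open>y \<in> Y\<close> Ju_def by blast
        then obtain n where "en n = i" using bij unfolding bij_betw_def by blast
        then show "y \<in> (\<Union>n. G n)" using \<open>y \<in> F i\<close> \<open>y \<in> Y\<close> G_def by blast
      qed
    qed
  qed
  then have "\<exists>S\<subseteq>Y. S \<in> Iplus X I \<and> (\<forall>n. card (S \<inter> G n) \<le> 1)"
    by (rule q[unfolded q_plus_def, rule_format, OF Y])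
  then obtain Z where Z: "Z \<subseteq> Y" "Z \<in> Iplus X I" "\<forall>n. card (Z \<inter> G n) \<le> 1"
    by blast
  have "card (Z \<inter> F i) \<le> 1" for i
  proof (cases "i \<in> Ju")
    case True
    then obtain n where "en n = i" using bij unfolding bij_betw_def by blast
    then have "Z \<inter> F i = Z \<inter> G n" using Z(1) G_def by blast
    then show ?thesis using Z(3) by simp
  next
    case False
    then have "Z \<inter> F i = {}" using Z(1) Ju_def by blast
    then show ?thesis by simp
  qed
  then show ?thesis using Z by blast
qed

lemma nd_extend:
  assumes nd: "nowhere_dense_in (cantor_space Y) N" and W: "finite W" "W \<subseteq> Y"
  shows "\<exists>f W'. finite W' \<and> W \<subseteq> W' \<and> W' \<subseteq> Y \<and> (\<forall>y\<in>W. f y = (y \<in> s)) \<and>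
     (\<forall>Z. (\<forall>y\<in>W'. (y \<in> Z) = f y) \<longrightarrow> char_pt Y Z \<notin> N)"
proof -
  let ?T = "cantor_space Y"
  have top: "topspace ?T = PiE Y (\<lambda>_. UNIV)" unfolding cantor_space_def by simp
  have chtop: "char_pt Y Z \<in> topspace ?T" for Z unfolding top char_pt_def by auto
  define Ob where "Ob = PiE Y (\<lambda>y. if y \<in> W then {y \<in> s} else UNIV)"
  have "{i \<in> Y. (if i \<in> W then {i \<in> s} else UNIV) \<noteq> topspace (discrete_topology (UNIV::bool set))} \<subseteq> W"
    by auto
  then have oO: "openin ?T Ob" unfolding Ob_def cantor_space_def openin_PiE_gen
    using W(1) finite_subset by auto
  have cO: "char_pt Y s \<in> Ob" unfolding Ob_def char_pt_def by auto
  have "\<not> Ob \<subseteq> ?T closure_of N"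
  proof
    assume "Ob \<subseteq> ?T closure_of N"
    then have "Ob \<subseteq> ?T interior_of (?T closure_of N)" using oO interior_of_maximal by blast
    then show False using nd cO unfolding nowhere_dense_in_def by blast
  qed
  then obtain f where f: "f \<in> Ob" "f \<notin> ?T closure_of N" by blast
  have fT: "f \<in> topspace ?T" using f(1) oO openin_subset by blast
  have "openin ?T (topspace ?T - ?T closure_of N)" by (simp add: openin_diff closedin_closure_of)
  then obtain U where U: "finite {i \<in> Y. U i \<noteq> topspace (discrete_topology (UNIV::bool set))}"
     "f \<in> PiE Y U" "PiE Y U \<subseteq> topspace ?T - ?T closure_of N"
    unfolding cantor_space_def openin_product_topology_alt using f fT unfolding cantor_space_def by blast
  define W' where "W' = W \<union> {i \<in> Y. U i \<noteq> UNIV}"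
  show ?thesis
  proof (intro exI conjI allI impI ballI)
    show "finite W'" using U(1) W(1) W'_def by simp
    show "W \<subseteq> W'" "W' \<subseteq> Y" using W'_def W(2) by auto
    fix y assume "y \<in> W"
    then have "f y \<in> (if y \<in> W then {y \<in> s} else UNIV)" using f(1) W(2) unfolding Ob_def by blast
    then show "f y = (y \<in> s)" using \<open>y \<in> W\<close> by simp
  next
    fix Z assume Z: "\<forall>y\<in>W'. (y \<in> Z) = f y"
    have "char_pt Y Z \<in> PiE Y U"
    proof (rule PiE_I)
      fix y assume "y \<in> Y"
      show "char_pt Y Z y \<in> U y"
      proof (cases "U y = UNIV")
        case True then show ?thesis by simp
      next
        case False
        then have "y \<in> W'" using W'_def \<open>y \<in> Y\<close> by blast
        then show ?thesis using Z U(2) \<open>y \<in> Y\<close> unfolding char_pt_def by auto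
      qed
    next
      fix y assume "y \<notin> Y" then show "char_pt Y Z y = undefined" unfolding char_pt_def by simp
    qed
    then have "char_pt Y Z \<notin> ?T closure_of N" using U(3) by blast
    moreover have "N \<subseteq> topspace ?T" using nd unfolding nowhere_dense_in_def by blast
    ultimately show "char_pt Y Z \<notin> N" using closure_of_subset by blast
  qed
qed


theorem mainTheorem8:
  fixes X :: "'a set" and I :: "'a set set" and \<tau> :: "'a topology"
    and F :: "nat \<Rightarrow> 'a set"
  assumes "countable X" and "infinite X"
    and "ideal_on X I" and "q_plus X I" and "hereditarily_meager X I"
    and "topspace \<tau> = X" and "I_crowded_topology I \<tau>"
    and "weight_below_mc \<tau>"
    and "\<forall>i. finite (F i) \<and> F i \<subseteq> X"
    and "\<forall>i j. i \<noteq> j \<longrightarrow> F i \<inter> F j = {}"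
    and "I_tau_crowded X I \<tau> (\<Union>i. F i)"
  shows "\<exists>S \<subseteq> (\<Union>i. F i). I_tau_crowded X I \<tau> S \<and> (\<forall>i. card (S \<inter> F i) \<le> 1)
           \<and> \<tau> closure_of S = \<tau> closure_of (\<Union>i. F i)"
proof -
  note id = assms(3) and q = assms(4) and hm = assms(5) and top = assms(6)
  note finF = assms(9) and dis = assms(10) and cr = assms(11)
  define A where "A = (\<Union>i. F i)"
  have AX: "A \<subseteq> X" using finF A_def by blast
  have emptyI: "{} \<in> I" using id unfolding ideal_on_def by blast
  obtain B where B: "base_of \<tau> B" "\<forall>K::'a set set. K \<lesssim> B \<longrightarrow> MA_countable K"
    using assms(8) unfolding weight_below_mc_def by blast
  have Bopen: "\<And>U. U \<in> B \<Longrightarrow> openin \<tau> U" using B(1) unfolding base_of_def by blast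
  have Bcov: "\<And>U x. openin \<tau> U \<Longrightarrow> x \<in> U \<Longrightarrow> \<exists>V\<in>B. x \<in> V \<and> V \<subseteq> U"
  proof -
    fix U x assume "openin \<tau> U" "x \<in> U"
    then obtain \<C> where "\<C> \<subseteq> B" "\<Union>\<C> = U" using B(1) unfolding base_of_def by meson
    then show "\<exists>V\<in>B. x \<in> V \<and> V \<subseteq> U" using \<open>x \<in> U\<close> by blast
  qed
  show ?thesis
  proof (cases "A = {}")
    case True
    show ?thesis
      by (rule exI[of _ "{}"]) (use True in \<open>auto simp: A_def I_tau_crowded_def\<close>)
  next
    case False
    then obtain x0 where x0: "x0 \<in> A" by blast
    then obtain U0 where U0: "U0 \<in> B" using Bcov[of "topspace \<tau>" x0] AX top by auto
    define B' where "B' = {U \<in> B. A \<inter> U \<noteq> {}}"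
    have AUpos: "A \<inter> U \<in> Iplus X I" if "U \<in> B'" for U
      using cr that Bopen unfolding B'_def A_def I_tau_crowded_def by blast
    have "\<forall>U\<in>B'. \<exists>Y. Y \<subseteq> A \<inter> U \<and> Y \<in> Iplus X I \<and> (\<forall>i. card (Y \<inter> F i) \<le> 1)"
    proof
      fix U assume "U \<in> B'"
      show "\<exists>Y. Y \<subseteq> A \<inter> U \<and> Y \<in> Iplus X I \<and> (\<forall>i. card (Y \<inter> F i) \<le> 1)"
        using selector_exists[OF id q AUpos[OF \<open>U \<in> B'\<close>], of F] finF dis A_def by blast
    qed
    from bchoice[OF this] obtain Yf where Yf: "\<forall>U\<in>B'. Yf U \<subseteq> A \<inter> U \<and> Yf U \<in> Iplus X I \<and> (\<forall>i. card (Yf U \<inter> F i) \<le> 1)"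
      by blast
    have "\<forall>U\<in>B'. \<exists>NS. countable NS \<and> (\<forall>N\<in>NS. nowhere_dense_in (cantor_space (Yf U)) N) \<and>
          char_pt (Yf U) ` {S \<in> I. S \<subseteq> Yf U} \<subseteq> \<Union>NS"
    proof
      fix U assume "U \<in> B'"
      then have "Yf U \<in> Iplus X I" using Yf by blast
      then have "meager_in (cantor_space (Yf U)) (char_pt (Yf U) ` {S \<in> I. S \<subseteq> Yf U})"
        using hm unfolding hereditarily_meager_def by blast
      then show "\<exists>NS. countable NS \<and> (\<forall>N\<in>NS. nowhere_dense_in (cantor_space (Yf U)) N) \<and>
          char_pt (Yf U) ` {S \<in> I. S \<subseteq> Yf U} \<subseteq> \<Union>NS" unfolding meager_in_def by blast
    qed
    from bchoice[OF this] obtain Nf where Nf: "\<forall>U\<in>B'. countable (Nf U) \<and> (\<forall>N\<in>Nf U. nowhere_dense_in (cantor_space (Yf U)) N) \<and>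
          char_pt (Yf U) ` {S \<in> I. S \<subseteq> Yf U} \<subseteq> \<Union>(Nf U)"
      by blast
    define NN where "NN = (\<lambda>U k. from_nat_into (Nf U) k)"
    have Nfne: "Nf U \<noteq> {}" if "U \<in> B'" for U
      using Nf that emptyI by blast
    have NNnd: "nowhere_dense_in (cantor_space (Yf U)) (NN U k)" if "U \<in> B'" for U k
    proof -
      have "NN U k \<in> Nf U" using from_nat_into[OF Nfne[OF that]] NN_def by simp
      then show ?thesis using Nf that by blast
    qed
    have NNsurj: "\<exists>k. NN U k = N" if "U \<in> B'" "N \<in> Nf U" for U N
    proof -
      have "countable (Nf U)" using Nf that(1) by blast
      then show ?thesis using from_nat_into_surj[of "Nf U" N] that(2) unfolding NN_def by blast
    qed
    define Fl where "Fl = (\<lambda>n. \<Union>i\<in>{..<n}. F i)"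
    have Fl_mono: "n \<le> m \<Longrightarrow> Fl n \<subseteq> Fl m" for n m unfolding Fl_def
      by (intro UN_mono) auto
    have Fl_A: "Fl n \<subseteq> A" for n unfolding Fl_def A_def by auto
    have Fl_fin: "finite (Fl n)" for n unfolding Fl_def using finF by auto
    have Fl_dis: "F i \<inter> Fl n = {}" if ni: "n \<le> i" for n i
    proof -
      have "F i \<inter> F j = {}" if "j < n" for j
      proof -
        have "i \<noteq> j" using ni that by simp
        then show ?thesis using dis by blast
      qed
      then show ?thesis unfolding Fl_def by blast
    qed
    have Fl_in: "i < n \<Longrightarrow> F i \<subseteq> Fl n" for n i unfolding Fl_def by auto
    have fin_in_Fl: "finite W \<Longrightarrow> W \<subseteq> A \<Longrightarrow> \<exists>m. W \<subseteq> Fl m" for W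
    proof (induction W rule: finite_induct)
      case empty then show ?case by blast
    next
      case (insert x W)
      then obtain m where m: "W \<subseteq> Fl m" by blast
      obtain i where "x \<in> F i" using insert(4) A_def by blast
      moreover have "i < max m (Suc i)" "m \<le> max m (Suc i)" by auto
      ultimately have "insert x W \<subseteq> Fl (max m (Suc i))"
        using m Fl_mono[of m "max m (Suc i)"] Fl_in[of i "max m (Suc i)"] by blast
      then show ?case by blast
    qed
    define C where "C = {p. fst p \<subseteq> Fl (snd p) \<and> (\<forall>i. card (fst p \<inter> F i) \<le> 1)}"
    define le where "le = (\<lambda>p q. snd q \<le> snd p \<and> fst q = fst p \<inter> Fl (snd q))"
    define D where "D = (\<lambda>j. {p. snd j < snd p \<and> (fst j \<in> B' \<longrightarrow>
        (\<forall>Z \<subseteq> Yf (fst j). Z \<inter> Fl (snd p) = fst p \<inter> Yf (fst j) \<longrightarrow> char_pt (Yf (fst j)) Z \<notin> NN (fst j) (snd j)))})"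
    have "({}, 0) \<in> C" unfolding C_def by simp
    then have Cne: "C \<noteq> {}" by blast
    have Ccount: "countable C"
    proof -
      have "C \<subseteq> (\<Union>n. Pow (Fl n) \<times> {n})"
      proof
        fix p assume "p \<in> C"
        then have "fst p \<in> Pow (Fl (snd p))" unfolding C_def by simp
        then have "p \<in> Pow (Fl (snd p)) \<times> {snd p}" by (simp add: mem_Times_iff)
        then show "p \<in> (\<Union>n. Pow (Fl n) \<times> {n})" by (rule UN_I[OF UNIV_I])
      qed
      moreover have "countable (\<Union>n. Pow (Fl n) \<times> {n})"
        using Fl_fin by (intro countable_UN) (auto intro: countable_finite)
      ultimately show ?thesis using countable_subset by blast
    qed
    have rf: "\<forall>p\<in>C. le p p" unfolding C_def le_def by auto
    have tr: "\<forall>p\<in>C. \<forall>q\<in>C. \<forall>r\<in>C. le p q \<and> le q r \<longrightarrow> le p r"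
    proof (intro ballI impI)
      fix p q r assume "le p q \<and> le q r"
      then have a: "snd q \<le> snd p" "fst q = fst p \<inter> Fl (snd q)" "snd r \<le> snd q" "fst r = fst q \<inter> Fl (snd r)"
        unfolding le_def by auto
      then have "Fl (snd r) \<subseteq> Fl (snd q)" using Fl_mono by blast
      moreover have "snd r \<le> snd p" using a by linarith
      ultimately have "fst r = fst p \<inter> Fl (snd r)" "snd r \<le> snd p" using a(2,4) by blast+
      then show "le p r" unfolding le_def by blast
    qed
    have an: "\<forall>p\<in>C. \<forall>q\<in>C. le p q \<and> le q p \<longrightarrow> p = q"
    proof (intro ballI impI)
      fix p q assume pq: "p \<in> C" "q \<in> C" "le p q \<and> le q p"
      then have e: "snd p = snd q" unfolding le_def by simp
      have "fst p \<subseteq> Fl (snd p)" using pq(1) C_def by simp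
      then have "fst p = fst q" using pq(3) e unfolding le_def by blast
      then show "p = q" using e by (simp add: prod_eq_iff)
    qed
    have dn: "\<forall>j\<in>B \<times> (UNIV::nat set). \<forall>p\<in>C. \<exists>q\<in>D j \<inter> C. le q p"
    proof (intro ballI)
      fix j p assume j: "j \<in> B \<times> (UNIV::nat set)" and p: "p \<in> C"
      obtain U k where jUk: "j = (U, k)" by (cases j)
      obtain s n where psn: "p = (s, n)" by (cases p)
      have sC: "s \<subseteq> Fl n" "\<forall>i. card (s \<inter> F i) \<le> 1" using p psn C_def by auto
      show "\<exists>q\<in>D j \<inter> C. le q p"
      proof (cases "U \<in> B'")
        case False
        have "(s, max n (Suc k)) \<in> D j \<inter> C" using False sC Fl_mono[of n "max n (Suc k)"]
          unfolding D_def C_def jUk by auto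
        moreover have "le (s, max n (Suc k)) p" unfolding le_def psn using sC by auto
        ultimately show ?thesis by blast
      next
        case True
        let ?Y = "Yf U"
        have Y: "?Y \<subseteq> A \<inter> U" "\<forall>i. card (?Y \<inter> F i) \<le> 1" using Yf True by auto
        define W where "W = ?Y \<inter> Fl n"
        have W: "finite W" "W \<subseteq> ?Y" using Fl_fin W_def by auto
        obtain f W' where fW: "finite W'" "W \<subseteq> W'" "W' \<subseteq> ?Y" "\<forall>y\<in>W. f y = (y \<in> s)"
          "\<forall>Z. (\<forall>y\<in>W'. (y \<in> Z) = f y) \<longrightarrow> char_pt ?Y Z \<notin> NN U k"
          using nd_extend[OF NNnd[OF True, of k] W, of s] by blast
        obtain m0 where m0: "W' \<subseteq> Fl m0" using fin_in_Fl[OF fW(1)] fW(3) Y(1) by blast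
        define m where "m = max m0 (max n (Suc k))"
        have m: "n \<le> m" "k < m" "W' \<subseteq> Fl m" using m0 Fl_mono[of m0 m] m_def by auto
        define t where "t = s \<union> {y \<in> W' - W. f y}"
        have newY: "{y \<in> W' - W. f y} \<subseteq> ?Y - Fl n" using fW(3) W_def by blast
        have tFl: "t \<subseteq> Fl m" using sC(1) Fl_mono[OF m(1)] m(3) t_def by blast
        have tcard: "card (t \<inter> F i) \<le> 1" for i
        proof (cases "i < n")
          case True
          then have "t \<inter> F i = s \<inter> F i" using Fl_in[OF True] newY t_def by blast
          then show ?thesis using sC(2) by simp
        next
          case False
          then have "s \<inter> F i = {}" using sC(1) Fl_dis[of n i] by auto
          then have "t \<inter> F i \<subseteq> ?Y \<inter> F i" using newY t_def by blast
          then have "card (t \<inter> F i) \<le> card (?Y \<inter> F i)" using finF by (meson card_mono finite_Int)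
          then show ?thesis using Y(2) by (meson le_trans)
        qed
        have tC: "(t, m) \<in> C" unfolding C_def using tFl tcard by simp
        have tle: "le (t, m) p" unfolding le_def psn using m(1) sC(1) newY t_def by auto
        have tD: "(t, m) \<in> D j"
          unfolding D_def jUk
        proof (simp add: m(2) True, intro allI impI)
          fix Z assume Z: "Z \<subseteq> ?Y" "Z \<inter> Fl m = t \<inter> ?Y"
          have "\<forall>y\<in>W'. (y \<in> Z) = f y"
          proof
            fix y assume y: "y \<in> W'"
            then have yY: "y \<in> ?Y" "y \<in> Fl m" using fW(3) m(3) by auto
            then have "(y \<in> Z) = (y \<in> t)" using Z by blast
            moreover have "(y \<in> t) = f y"
            proof (cases "y \<in> W")
              case True then show ?thesis using fW(4) t_def by auto
            next
              case False
              then have "y \<notin> Fl n" using yY W_def by blast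
              then have "y \<notin> s" using sC(1) by blast
              then show ?thesis using False y t_def by auto
            qed
            ultimately show "(y \<in> Z) = f y" by simp
          qed
          then show "char_pt ?Y Z \<notin> NN U k" using fW(5) by blast
        qed
        show ?thesis using tC tle tD by blast
      qed
    qed
    have "\<exists>G \<subseteq> C. (\<forall>p\<in>G. \<forall>q\<in>G. \<exists>r\<in>C. le r p \<and> le r q) \<and> (\<forall>j\<in>B \<times> (UNIV::nat set). G \<inter> D j \<noteq> {})"
    proof (cases "finite B")
      case True
      then have "countable (B \<times> (UNIV::nat set))" by (simp add: countable_finite)
      then show ?thesis using RS_generic[OF Cne tr rf dn] by blast
    next
      case False
      then obtain h where h: "B \<times> (UNIV::nat set) \<subseteq> h ` B" using infinite_surj_times_nat by blast
      have "MA_countable B" using B(2) lepoll_refl by blast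
      then show ?thesis using MA_generic[OF Cne Ccount tr rf an dn _ h] by blast
    qed
    then obtain G where G: "G \<subseteq> C" "\<forall>p\<in>G. \<forall>q\<in>G. \<exists>r\<in>C. le r p \<and> le r q"
      "\<forall>j\<in>B \<times> (UNIV::nat set). G \<inter> D j \<noteq> {}" by blast
    define S where "S = (\<Union>p\<in>G. fst p)"
    have key: "S \<inter> Fl (snd p) = fst p" if "p \<in> G" for p
    proof
      show "fst p \<subseteq> S \<inter> Fl (snd p)" using that G(1) C_def S_def by blast
      show "S \<inter> Fl (snd p) \<subseteq> fst p"
      proof
        fix x assume "x \<in> S \<inter> Fl (snd p)"
        then obtain q where q: "q \<in> G" "x \<in> fst q" "x \<in> Fl (snd p)" using S_def by blast
        have "\<exists>r\<in>C. le r p \<and> le r q" using G(2) that q(1) by blast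
        then obtain r where r: "r \<in> C" "le r p" "le r q" by blast
        then have "fst p = fst r \<inter> Fl (snd p)" "fst q = fst r \<inter> Fl (snd q)" unfolding le_def by simp_all
        then show "x \<in> fst p" using q(2,3) by blast
      qed
    qed
    have SA: "S \<subseteq> A" using G(1) Fl_A unfolding S_def C_def by blast
    have Scard: "card (S \<inter> F i) \<le> 1" for i
    proof -
      obtain p where p: "p \<in> G" "p \<in> D (U0, i)" using G(3) U0 by blast
      then have "i < snd p" unfolding D_def by simp
      then have "S \<inter> F i = fst p \<inter> F i" using key[OF p(1)] Fl_in by blast
      then show ?thesis using p(1) G(1) C_def by auto
    qed
    have Spos: "S \<inter> Yf U \<notin> I" if U: "U \<in> B'" for U
    proof
      assume inI: "S \<inter> Yf U \<in> I"
      then have "char_pt (Yf U) (S \<inter> Yf U) \<in> \<Union>(Nf U)" using Nf U by blast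
      then obtain N where "N \<in> Nf U" "char_pt (Yf U) (S \<inter> Yf U) \<in> N" by blast
      moreover then obtain k where "NN U k = N" using NNsurj U by blast
      moreover obtain p where p: "p \<in> G" "p \<in> D (U, k)" using G(3) U B'_def by blast
      moreover have "(S \<inter> Yf U) \<inter> Fl (snd p) = fst p \<inter> Yf U" using key[OF p(1)] by blast
      ultimately show False unfolding D_def using U by auto
    qed
    have SUpos: "S \<inter> U \<in> Iplus X I" if U: "U \<in> B'" for U
    proof -
      have "S \<inter> Yf U \<in> Iplus X I" using Spos[OF U] SA AX unfolding Iplus_def by blast
      moreover have "S \<inter> Yf U \<subseteq> S \<inter> U" using Yf U by blast
      ultimately show ?thesis using pos_mono[OF id] SA AX by blast
    qed
    have crowd: "I_tau_crowded X I \<tau> S"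
      unfolding I_tau_crowded_def
    proof (intro allI impI)
      fix U assume "openin \<tau> U"
      show "S \<inter> U = {} \<or> S \<inter> U \<in> Iplus X I"
      proof (cases "S \<inter> U = {}")
        case False
        then obtain x where x: "x \<in> S" "x \<in> U" by blast
        then obtain V where V: "V \<in> B" "x \<in> V" "V \<subseteq> U" using Bcov \<open>openin \<tau> U\<close> by blast
        then have "V \<in> B'" using x SA B'_def by blast
        then have "S \<inter> V \<in> Iplus X I" by (rule SUpos)
        then have "S \<inter> U \<in> Iplus X I" using pos_mono[OF id] V(3) SA AX by blast
        then show ?thesis by blast
      qed simp
    qed
    have "\<tau> closure_of S = \<tau> closure_of A"
    proof
      show "\<tau> closure_of S \<subseteq> \<tau> closure_of A" using SA by (rule closure_of_mono)
      have "A \<subseteq> \<tau> closure_of S"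
      proof
        fix x assume "x \<in> A"
        show "x \<in> \<tau> closure_of S"
          unfolding in_closure_of
        proof (intro conjI allI impI)
          show "x \<in> topspace \<tau>" using \<open>x \<in> A\<close> AX top by blast
          fix T assume "x \<in> T \<and> openin \<tau> T"
          then obtain V where V: "V \<in> B" "x \<in> V" "V \<subseteq> T" using Bcov by blast
          then have "V \<in> B'" using \<open>x \<in> A\<close> B'_def by blast
          then have "S \<inter> V \<noteq> {}" using SUpos emptyI unfolding Iplus_def by force
          then show "\<exists>y. y \<in> S \<and> y \<in> T" using V by blast
        qed
      qed
      then show "\<tau> closure_of A \<subseteq> \<tau> closure_of S"
        by (metis closure_of_closure_of closure_of_mono)
    qed
    then have clos: "\<tau> closure_of S = \<tau> closure_of A" .
    show ?thesis unfolding A_def[symmetric]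
      by (rule exI[of _ S]) (use SA crowd Scard clos in blast)
  qed
qed

end
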